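(* For any connected graph $G$ of order $n \ge 2$ and for any positive integer $k$, $1\le \dim_{k,f}(G)\le \frac{n}{2}$.
   Context: All graphs are finite, simple, undirected and connected. $d(x,y)$ is the length of a shortest $x$–$y$ path in $G$. For a positive integer $k$, $d_k(x,y)=\min\{d(x,y),k+1\}$ and $R_k\{x,y\}=\{z\in V(G): d_k(x,z)\neq d_k(y,z)\}$. For a function $g$ on $V(G)$ and $U\subseteq V(G)$, $g(U)=\sum_{s\in U}g(s)$. A function $h:V(G)\to[0,1]$ is a $k$-truncated resolving function of $G$ if $h(R_k\{x,y\})\ge 1$ for all distinct $x,y\in V(G)$. The fractional $k$-truncated metric dimension is $\dim_{k,f}(G)=\min\{h(V(G)): h \text{ is a } k\text{-truncated resolving function of } G\}$. *)

theory Defs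
  imports Main "HOL-Library.Extended_Real"
begin

definition connected_simple_graph :: "'a set \<Rightarrow> ('a \<Rightarrow> 'a \<Rightarrow> bool) \<Rightarrow> bool" where
  "connected_simple_graph V E \<longleftrightarrow>
     finite V \<and>
     (\<forall>x y. E x y \<longrightarrow> x \<in> V \<and> y \<in> V) \<and>
     (\<forall>x y. E x y \<longrightarrow> E y x) \<and>
     (\<forall>x. \<not> E x x) \<and>
     (\<forall>x\<in>V. \<forall>y\<in>V. \<exists>n. (E ^^ n) x y)"

definition gdist :: "('a \<Rightarrow> 'a \<Rightarrow> bool) \<Rightarrow> 'a \<Rightarrow> 'a \<Rightarrow> nat" where
  "gdist E x y = (LEAST n. (E ^^ n) x y)"

definition tdist :: "('a \<Rightarrow> 'a \<Rightarrow> bool) \<Rightarrow> nat \<Rightarrow> 'a \<Rightarrow> 'a \<Rightarrow> nat" where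
  "tdist E k x y = min (gdist E x y) (k + 1)"

definition resolving_set_k :: "'a set \<Rightarrow> ('a \<Rightarrow> 'a \<Rightarrow> bool) \<Rightarrow> nat \<Rightarrow> 'a \<Rightarrow> 'a \<Rightarrow> 'a set" where
  "resolving_set_k V E k x y = {z \<in> V. tdist E k x z \<noteq> tdist E k y z}"

definition k_truncated_resolving_function ::
  "'a set \<Rightarrow> ('a \<Rightarrow> 'a \<Rightarrow> bool) \<Rightarrow> nat \<Rightarrow> ('a \<Rightarrow> real) \<Rightarrow> bool" where
  "k_truncated_resolving_function V E k h \<longleftrightarrow>
     (\<forall>v\<in>V. 0 \<le> h v \<and> h v \<le> 1) \<and>
     (\<forall>x\<in>V. \<forall>y\<in>V. x \<noteq> y \<longrightarrow> sum h (resolving_set_k V E k x y) \<ge> 1)"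

definition frac_trunc_metric_dim :: "'a set \<Rightarrow> ('a \<Rightarrow> 'a \<Rightarrow> bool) \<Rightarrow> nat \<Rightarrow> real" where
  "frac_trunc_metric_dim V E k =
     Inf {sum h V | h. k_truncated_resolving_function V E k h}"

end

theory Submission
  imports Defs
begin

lemma tdist_self: "tdist E k x x = 0"
  unfolding tdist_def gdist_def by (simp add: Least_eq_0)

lemma tdist_pos:
  assumes "(E ^^ m) y x" "y \<noteq> x"
  shows "tdist E k y x \<noteq> 0"
proof
  assume "tdist E k y x = 0"
  then have "gdist E y x = 0" by (simp add: tdist_def)
  moreover have "(E ^^ gdist E y x) y x" unfolding gdist_def by (rule LeastI[of _ m]) (rule assms(1))
  ultimately show False using assms(2) by simp
qed

lemma res_mem:
  assumes G: "connected_simple_graph V E" and xy: "x \<in> V" "y \<in> V" "x \<noteq> y"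
  shows "x \<in> resolving_set_k V E k x y"
proof -
  obtain m where "(E ^^ m) y x" using G xy unfolding connected_simple_graph_def by blast
  then have "tdist E k y x \<noteq> 0" using tdist_pos xy by metis
  then show ?thesis using xy tdist_self[of E k x] unfolding resolving_set_k_def by auto
qed

lemma res_mem2:
  assumes G: "connected_simple_graph V E" and xy: "x \<in> V" "y \<in> V" "x \<noteq> y"
  shows "y \<in> resolving_set_k V E k x y"
proof -
  obtain m where "(E ^^ m) x y" using G xy unfolding connected_simple_graph_def by blast
  then have "tdist E k x y \<noteq> 0" using tdist_pos xy by metis
  then show ?thesis using xy tdist_self[of E k y] unfolding resolving_set_k_def by auto
qed

theorem proposition2p6:
  fixes V :: "'a set" and E :: "'a \<Rightarrow> 'a \<Rightarrow> bool" and k :: nat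
  assumes "connected_simple_graph V E"
    and "card V \<ge> 2"
    and "k \<ge> 1"
  shows "1 \<le> frac_trunc_metric_dim V E k \<and>
         frac_trunc_metric_dim V E k \<le> real (card V) / 2"
proof -
  have fin: "finite V" using assms(1) unfolding connected_simple_graph_def by blast
  define S where "S = {sum h V | h. k_truncated_resolving_function V E k h}"
  have Rsub: "resolving_set_k V E k x y \<subseteq> V" for x y unfolding resolving_set_k_def by auto
  have Rfin: "finite (resolving_set_k V E k x y)" for x y using fin Rsub finite_subset by metis
  define h0 :: "'a \<Rightarrow> real" where "h0 = (\<lambda>_. 1/2)"
  have "k_truncated_resolving_function V E k h0"
    unfolding k_truncated_resolving_function_def
  proof (intro conjI ballI impI)
    fix x y assume xy: "x \<in> V" "y \<in> V" "x \<noteq> y"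
    have "sum h0 {x, y} \<le> sum h0 (resolving_set_k V E k x y)"
      using res_mem[OF assms(1) xy, of k] res_mem2[OF assms(1) xy, of k] Rfin
      by (intro sum_mono2) (auto simp: h0_def)
    moreover have "sum h0 {x, y} = 1" using xy by (simp add: h0_def)
    ultimately show "1 \<le> sum h0 (resolving_set_k V E k x y)" by simp
  qed (auto simp: h0_def)
  then have h0S: "sum h0 V \<in> S" unfolding S_def by blast
  have lb: "1 \<le> s" if sS: "s \<in> S" for s
  proof -
    obtain h where h: "k_truncated_resolving_function V E k h" "s = sum h V"
      using sS unfolding S_def by blast
    obtain x y where xy: "x \<in> V" "y \<in> V" "x \<noteq> y"
      using assms(2) card_le_Suc0_iff_eq[OF fin] by (metis not_less_eq_eq numeral_2_eq_2)
    have "1 \<le> sum h (resolving_set_k V E k x y)" using h(1) xy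
      unfolding k_truncated_resolving_function_def by blast
    also have "\<dots> \<le> sum h V" using h(1) Rsub fin
      unfolding k_truncated_resolving_function_def by (intro sum_mono2) auto
    finally show ?thesis using h by simp
  qed
  have bdd: "bdd_below S" using lb by (metis bdd_belowI)
  have "1 \<le> Inf S" using h0S lb by (intro cInf_greatest) auto
  moreover have "Inf S \<le> sum h0 V" using h0S bdd by (rule cInf_lower)
  moreover have "sum h0 V = real (card V) / 2" by (simp add: h0_def)
  ultimately show ?thesis unfolding frac_trunc_metric_dim_def S_def by simp
qed

end
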